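(* Let $R$ be a ring whose only idempotents are $0$ and $1$. Then $R$ is a GSWNC ring if and only if $R$ is a local ring whose Jacobson radical $J(R)$ is nil.
   Context: All rings are associative with identity. An element $a$ of a ring is strongly weakly nil-clean if there exist an idempotent $e$ and a nilpotent $q$ with $eq = qe$ such that $a = q + e$ or $a = q - e$. A ring is GSWNC if every non-invertible element is strongly weakly nil-clean. *)

theory Defs
  imports Main
begin

definition is_idem :: "'a::ring_1 \<Rightarrow> bool" where
  "is_idem e \<longleftrightarrow> e * e = e"

definition is_nilp :: "'a::ring_1 \<Rightarrow> bool" where
  "is_nilp q \<longleftrightarrow> (\<exists>n::nat. q ^ n = 0)"

definition is_unit :: "'a::ring_1 \<Rightarrow> bool" where
  "is_unit a \<longleftrightarrow> (\<exists>b. a * b = 1 \<and> b * a = 1)"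

definition strongly_weakly_nil_clean :: "'a::ring_1 \<Rightarrow> bool" where
  "strongly_weakly_nil_clean a \<longleftrightarrow>
     (\<exists>e q. is_idem e \<and> is_nilp q \<and> e * q = q * e \<and> (a = q + e \<or> a = q - e))"

definition GSWNC :: "'a::ring_1 itself \<Rightarrow> bool" where
  "GSWNC (_ :: 'a itself) \<longleftrightarrow>
     (\<forall>a::'a. \<not> is_unit a \<longrightarrow> strongly_weakly_nil_clean a)"

definition left_ideal :: "'a::ring_1 set \<Rightarrow> bool" where
  "left_ideal I \<longleftrightarrow> 0 \<in> I \<and> (\<forall>a\<in>I. \<forall>b\<in>I. a + b \<in> I) \<and> (\<forall>a\<in>I. - a \<in> I)
     \<and> (\<forall>r. \<forall>a\<in>I. r * a \<in> I)"

definition maximal_left_ideal :: "'a::ring_1 set \<Rightarrow> bool" where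
  "maximal_left_ideal I \<longleftrightarrow> left_ideal I \<and> I \<noteq> UNIV \<and>
     (\<forall>K. left_ideal K \<and> I \<subseteq> K \<and> K \<noteq> UNIV \<longrightarrow> K = I)"

definition jacobson :: "'a::ring_1 itself \<Rightarrow> 'a set" where
  "jacobson (_ :: 'a itself) = \<Inter> {I :: 'a set. maximal_left_ideal I}"

definition local_ring :: "'a::ring_1 itself \<Rightarrow> bool" where
  "local_ring (_ :: 'a itself) \<longleftrightarrow> (\<exists>!I :: 'a set. maximal_left_ideal I)"

end

theory Submission
  imports Defs
begin

lemma geo_l: "(1 - (q::'a::ring_1)) * (\<Sum>i<n. q^i) = 1 - q^n"
proof (induction n)
  case (Suc n)
  have "(1 - q) * (\<Sum>i<Suc n. q^i) = (1 - q) * (\<Sum>i<n. q^i) + (1 - q) * q^n"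
    by (simp add: distrib_left)
  also have "\<dots> = 1 - q^n + (q^n - q * q^n)" using Suc.IH by (simp add: left_diff_distrib)
  finally show ?case by simp
qed simp

lemma geo_r: "(\<Sum>i<n. q^i) * (1 - (q::'a::ring_1)) = 1 - q^n"
proof (induction n)
  case (Suc n)
  have "(\<Sum>i<Suc n. q^i) * (1 - q) = (\<Sum>i<n. q^i) * (1 - q) + q^n * (1 - q)"
    by (simp add: distrib_right)
  also have "\<dots> = 1 - q^n + (q^n - q^n * q)" using Suc.IH by (simp add: right_diff_distrib)
  finally show ?case by (simp add: power_Suc2 del: power_Suc)
qed simp

lemma nilp_unit: "is_nilp (q::'a::ring_1) \<Longrightarrow> is_unit (1 - q)"
proof -
  assume "is_nilp q"
  then obtain n where "q^n = 0" unfolding is_nilp_def by blast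
  then show ?thesis unfolding is_unit_def using geo_l[of q n] geo_r[of q n] by auto
qed

lemma nilp_neg: "is_nilp (q::'a::ring_1) \<Longrightarrow> is_nilp (- q)"
  unfolding is_nilp_def by (metis mult_zero_right power_minus)

lemma unit_neg: "is_unit (u::'a::ring_1) \<Longrightarrow> is_unit (- u)"
  unfolding is_unit_def by (metis minus_mult_minus)

lemma left_inv_pow: "s * (x::'a::ring_1) = 1 \<Longrightarrow> s^n * x^n = 1"
proof (induction n)
  case (Suc n)
  have "s^Suc n * x^Suc n = s^n * (s * x) * x^n"
    by (simp only: power_Suc2[of s] power_Suc[of x] mult.assoc)
  then show ?case using Suc by simp
qed simp

lemma nilp_no_left_inv:
  assumes "(0::'a::ring_1) \<noteq> 1" "is_nilp (x::'a)" "s * x = 1" shows False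
proof -
  obtain n where "x^n = 0" using assms(2) unfolding is_nilp_def by blast
  with left_inv_pow[OF assms(3), of n] assms(1) show False by simp
qed

lemma nilp_no_right_inv:
  assumes "(0::'a::ring_1) \<noteq> 1" "is_nilp (x::'a)" "x * s = 1" shows False
proof -
  obtain n where "x^n = 0" using assms(2) unfolding is_nilp_def by blast
  with left_inv_pow[OF assms(3), of n] assms(1) show False by simp
qed

lemma swnc_simp:
  assumes idems: "\<forall>e::'a::ring_1. is_idem e \<longrightarrow> e = 0 \<or> e = 1"
  shows "strongly_weakly_nil_clean (a::'a) \<longleftrightarrow> is_nilp a \<or> is_nilp (a - 1) \<or> is_nilp (a + 1)"
proof
  assume "strongly_weakly_nil_clean a"
  then obtain e q where "is_idem e" "is_nilp q" "a = q + e \<or> a = q - e"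
    unfolding strongly_weakly_nil_clean_def by blast
  moreover have "e = 0 \<or> e = 1" using idems calculation by blast
  ultimately have "a = q \<or> a - 1 = q \<or> a + 1 = q" by auto
  then show "is_nilp a \<or> is_nilp (a - 1) \<or> is_nilp (a + 1)"
    using \<open>is_nilp q\<close> by blast
next
  assume "is_nilp a \<or> is_nilp (a - 1) \<or> is_nilp (a + 1)"
  moreover have "is_idem (0::'a)" "is_idem (1::'a)" by (simp_all add: is_idem_def)
  moreover have "a = a + 0" "a = (a - 1) + 1" "a = (a + 1) - 1" by simp_all
  ultimately show "strongly_weakly_nil_clean a"
    unfolding strongly_weakly_nil_clean_def
    by (metis mult_1_left mult_1_right mult_zero_left mult_zero_right)
qed

theorem corollary2p50:
  assumes nontriv: "(0::'a::ring_1) \<noteq> 1"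
    and idems: "\<forall>e::'a. is_idem e \<longrightarrow> e = 0 \<or> e = 1"
  shows "GSWNC TYPE('a) \<longleftrightarrow>
           (local_ring TYPE('a) \<and> (\<forall>x \<in> jacobson TYPE('a). is_nilp x))"
proof
  assume G: "GSWNC TYPE('a)"
  have H: "\<And>a::'a. \<not> is_unit a \<Longrightarrow> is_nilp a"
  proof -
    fix a :: 'a assume na: "\<not> is_unit a"
    then have "is_nilp a \<or> is_nilp (a - 1) \<or> is_nilp (a + 1)"
      using G swnc_simp[OF idems] unfolding GSWNC_def by blast
    moreover have "\<not> is_nilp (a - 1)"
    proof
      assume "is_nilp (a - 1)"
      then have "is_unit (1 - - (a - 1))" by (intro nilp_unit nilp_neg)
      then show False using na by simp
    qed
    moreover have "\<not> is_nilp (a + 1)"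
    proof
      assume "is_nilp (a + 1)"
      then have "is_unit (- (1 - (a + 1)))" by (intro unit_neg nilp_unit)
      then show False using na by simp
    qed
    ultimately show "is_nilp a" by blast
  qed
  have L: "\<And>a s::'a. \<not> is_unit a \<Longrightarrow> s * a = 1 \<Longrightarrow> False"
    using H nilp_no_left_inv[OF nontriv] by blast
  define N where "N = {a::'a. \<not> is_unit a}"
  have unit1: "is_unit (1::'a)" by (auto simp: is_unit_def)
  have N_ideal: "left_ideal N"
    unfolding left_ideal_def
  proof (intro conjI ballI allI)
    show "0 \<in> N" using nontriv by (auto simp: N_def is_unit_def)
  next
    fix a assume "a \<in> N" then show "- a \<in> N"
      using unit_neg[of "-a"] by (auto simp: N_def)
  next
    fix r a assume aN: "a \<in> N" show "r * a \<in> N"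
    proof (rule ccontr)
      assume "r * a \<notin> N"
      then obtain v where "(r * a) * v = 1" "v * (r * a) = 1" by (auto simp: N_def is_unit_def)
      then have "(v * r) * a = 1" by (simp add: mult.assoc)
      then show False using L aN by (auto simp: N_def)
    qed
  next
    fix a b assume aN: "a \<in> N" and bN: "b \<in> N" show "a + b \<in> N"
    proof (rule ccontr)
      assume "a + b \<notin> N"
      then obtain v where v: "v * (a + b) = 1" by (auto simp: N_def is_unit_def)
      have "\<not> is_unit (v * a)"
      proof
        assume "is_unit (v * a)"
        then obtain w where "w * (v * a) = 1" by (auto simp: is_unit_def)
        then have "(w * v) * a = 1" by (simp add: mult.assoc)
        then show False using L aN by (auto simp: N_def)
      qed
      then have "is_unit (1 - v * a)" using H nilp_unit by blast
      moreover have "1 - v * a = v * b" using v by (simp add: algebra_simps)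
      ultimately obtain w where "w * (v * b) = 1" by (auto simp: is_unit_def)
      then have "(w * v) * b = 1" by (simp add: mult.assoc)
      then show False using L bN by (auto simp: N_def)
    qed
  qed
  have proper0: "\<And>K x. left_ideal K \<Longrightarrow> K \<noteq> UNIV \<Longrightarrow> x \<in> K \<Longrightarrow> x \<in> N"
  proof -
    fix K :: "'a set" and x assume K: "left_ideal K" "K \<noteq> UNIV" and x: "x \<in> K"
    show "x \<in> N"
    proof (rule ccontr)
      assume "x \<notin> N"
      then obtain v where "v * x = 1" by (auto simp: N_def is_unit_def)
      then have "1 \<in> K" using K x unfolding left_ideal_def by (metis)
      then have "\<forall>r. r * 1 \<in> K" using K unfolding left_ideal_def by blast
      then have "\<forall>r. r \<in> K" by simp
      then show False using K by auto
    qed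
  qed
  have proper: "\<And>K. left_ideal K \<Longrightarrow> K \<noteq> UNIV \<Longrightarrow> K \<subseteq> N"
    using proper0 by blast
  have NU: "N \<noteq> UNIV" using unit1 by (auto simp: N_def)
  have Nmax: "maximal_left_ideal N"
    unfolding maximal_left_ideal_def using N_ideal NU proper by blast
  have uniq: "\<And>I. maximal_left_ideal I \<Longrightarrow> I = N"
    unfolding maximal_left_ideal_def using N_ideal NU proper by blast
  have "local_ring TYPE('a)" unfolding local_ring_def using Nmax uniq by blast
  moreover have "jacobson TYPE('a) = N"
  proof -
    have "{I. maximal_left_ideal I} = {N}" using Nmax uniq by blast
    then show ?thesis unfolding jacobson_def by simp
  qed
  ultimately show "local_ring TYPE('a) \<and> (\<forall>x \<in> jacobson TYPE('a). is_nilp x)"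
    using H by (auto simp: N_def)
next
  assume A: "local_ring TYPE('a) \<and> (\<forall>x \<in> jacobson TYPE('a). is_nilp x)"
  then obtain M :: "'a set" where Mmax: "maximal_left_ideal M"
    and uniq: "\<And>I. maximal_left_ideal I \<Longrightarrow> I = M"
    unfolding local_ring_def by blast
  have "{I. maximal_left_ideal I} = {M}" using Mmax uniq by blast
  then have "jacobson TYPE('a) = M" unfolding jacobson_def by simp
  then have Mnil: "\<And>x. x \<in> M \<Longrightarrow> is_nilp x" using A by auto
  have Mi: "left_ideal M" and MU: "M \<noteq> UNIV"
    and Mm: "\<And>K. left_ideal K \<Longrightarrow> M \<subseteq> K \<Longrightarrow> K \<noteq> UNIV \<Longrightarrow> K = M"
    using Mmax unfolding maximal_left_ideal_def by auto
  have claim: "\<And>a. (\<forall>s. s * a \<noteq> 1) \<Longrightarrow> a \<in> M"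
  proof -
    fix a :: 'a assume na: "\<forall>s. s * a \<noteq> 1"
    define K where "K = {r * a + m | r m. m \<in> M}"
    have Ki: "left_ideal K" unfolding left_ideal_def
    proof (intro conjI ballI allI)
      have "0 \<in> M" using Mi unfolding left_ideal_def by blast
      moreover have "(0::'a) = 0 * a + 0" by simp
      ultimately show "0 \<in> K" unfolding K_def by blast
    next
      fix x y assume "x \<in> K" "y \<in> K"
      then obtain r m r' m' where "x = r * a + m" "y = r' * a + m'" "m \<in> M" "m' \<in> M"
        unfolding K_def by blast
      moreover have "m + m' \<in> M" using Mi calculation unfolding left_ideal_def by blast
      moreover have "x + y = (r + r') * a + (m + m')" using calculation
        by (simp add: algebra_simps)
      ultimately show "x + y \<in> K" unfolding K_def by blast
    next
      fix x assume "x \<in> K"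
      then obtain r m where "x = r * a + m" "m \<in> M" unfolding K_def by blast
      moreover have "- m \<in> M" using Mi calculation unfolding left_ideal_def by blast
      moreover have "- x = (- r) * a + (- m)" using calculation by simp
      ultimately show "- x \<in> K" unfolding K_def by blast
    next
      fix t x assume "x \<in> K"
      then obtain r m where "x = r * a + m" "m \<in> M" unfolding K_def by blast
      moreover have "t * m \<in> M" using Mi calculation unfolding left_ideal_def by blast
      moreover have "t * x = (t * r) * a + t * m" using calculation
        by (simp add: algebra_simps)
      ultimately show "t * x \<in> K" unfolding K_def by blast
    qed
    have MK: "M \<subseteq> K"
    proof
      fix m assume "m \<in> M"
      moreover have "m = 0 * a + m" by simp
      ultimately show "m \<in> K" unfolding K_def by blast
    qed
    have "K \<noteq> UNIV"
    proof
      assume "K = UNIV"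
      then have "1 \<in> K" by simp
      then obtain r m where rm: "1 = r * a + m" "m \<in> M" unfolding K_def by blast
      then have "is_unit (1 - m)" using Mnil nilp_unit by blast
      then obtain w where "w * (1 - m) = 1" by (auto simp: is_unit_def)
      moreover have "1 - m = r * a" using rm by (simp add: algebra_simps)
      ultimately have "(w * r) * a = 1" by (simp add: mult.assoc)
      then show False using na by blast
    qed
    then have "K = M" by (rule Mm[OF Ki MK])
    moreover have "a \<in> K"
    proof -
      have "0 \<in> M" using Mi unfolding left_ideal_def by blast
      moreover have "a = 1 * a + 0" by simp
      ultimately show ?thesis unfolding K_def by blast
    qed
    ultimately show "a \<in> M" by simp
  qed
  have nu: "\<And>a::'a. \<not> is_unit a \<Longrightarrow> is_nilp a"
  proof -
    fix a :: 'a assume na: "\<not> is_unit a"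
    show "is_nilp a"
    proof (cases "\<forall>s. s * a \<noteq> 1")
      case True then show ?thesis using claim Mnil by blast
    next
      case False
      then obtain s where s: "s * a = 1" by blast
      show ?thesis
      proof (cases "\<forall>t. t * s \<noteq> 1")
        case True
        then have "is_nilp s" using claim Mnil by blast
        then show ?thesis using nilp_no_right_inv[OF nontriv] s by blast
      next
        case False
        then obtain t where t: "t * s = 1" by blast
        have "t = t * (s * a)" using s by simp
        also have "\<dots> = a" using t by (simp add: mult.assoc[symmetric])
        finally have "a * s = 1" using t by simp
        then show ?thesis using na s by (auto simp: is_unit_def)
      qed
    qed
  qed
  show "GSWNC TYPE('a)"
    unfolding GSWNC_def
  proof (intro allI impI)
    fix a :: 'a assume "\<not> is_unit a"
    then have "is_nilp a" using nu by blast
    then show "strongly_weakly_nil_clean a" using swnc_simp[OF idems] by blast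
  qed
qed

end
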